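(* Let $\mathcal{B}$ be a prime Banach algebra over $\mathbb{R}$ or $\mathbb{C}$, and let $\mathcal{H}_1,\mathcal{H}_2$ be non-empty open subsets of $\mathcal{B}$. Suppose $\mathcal{B}$ admits a continuous automorphism $f$ such that for every $(x,y)\in\mathcal{H}_1\times\mathcal{H}_2$ there exist positive integers $p=p(x,y)$, $q=q(x,y)$ with $$f(x^{p}\circ y^{q})-[x^{p},y^{q}]\in Z(\mathcal{B}).$$ Then $\mathcal{B}$ is commutative.
   Context: $Z(\mathcal{B})$ denotes the center of $\mathcal{B}$. For $x,y\in\mathcal{B}$, $x\circ y=xy+yx$ and $[x,y]=xy-yx$. $\mathcal{B}$ is prime if $x\mathcal{B}y=\{0\}$ implies $x=0$ or $y=0$. An automorphism of $\mathcal{B}$ is a bijective map $f:\mathcal{B}\to\mathcal{B}$ with $f(x+y)=f(x)+f(y)$ and $f(xy)=f(x)f(y)$ for all $x,y$. *)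

theory Defs
  imports "HOL-Analysis.Analysis"
begin

(* Positive powers x^n (n >= 1) in a possibly non-unital ring; the value at n = 0 is a dummy
   and is never used (the theorem only uses exponents p, q > 0). *)
fun ppow :: "'a::times \<Rightarrow> nat \<Rightarrow> 'a" where
  "ppow x 0 = x"
| "ppow x (Suc 0) = x"
| "ppow x (Suc (Suc n)) = ppow x (Suc n) * x"

definition jordan_prod :: "'a::ring \<Rightarrow> 'a \<Rightarrow> 'a" where
  "jordan_prod x y = x * y + y * x"

definition commutator :: "'a::ring \<Rightarrow> 'a \<Rightarrow> 'a" where
  "commutator x y = x * y - y * x"

definition center :: "'a::ring set" where
  "center = {z. \<forall>x. z * x = x * z}"

definition prime_ring :: "'a::ring itself \<Rightarrow> bool" where
  "prime_ring _ \<longleftrightarrow> (\<forall>x y::'a. (\<forall>b. x * b * y = 0) \<longrightarrow> x = 0 \<or> y = 0)"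

definition ring_automorphism :: "('a::ring \<Rightarrow> 'a) \<Rightarrow> bool" where
  "ring_automorphism f \<longleftrightarrow> bij f \<and> (\<forall>x y. f (x + y) = f x + f y) \<and> (\<forall>x y. f (x * y) = f x * f y)"

end

theory Submission
  imports Defs
begin

lemma ppow_Suc: "m \<ge> 1 \<Longrightarrow> ppow x (Suc m) = ppow x m * (x::'a::times)"
  by (cases m) auto

lemma ppow_add: "m \<ge> 1 \<Longrightarrow> k \<ge> 1 \<Longrightarrow> ppow (x::'a::semigroup_mult) (m + k) = ppow x m * ppow x k"
proof (induction k)
  case 0 then show ?case by simp
next
  case (Suc k)
  show ?case
  proof (cases "k = 0")
    case True then show ?thesis using Suc.prems by (simp add: ppow_Suc)
  next
    case False
    then have "ppow x (m + k) = ppow x m * ppow x k" using Suc by auto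
    then show ?thesis using False Suc.prems by (simp add: ppow_Suc mult.assoc)
  qed
qed

lemma ppow_zero_ge: "M \<ge> 1 \<Longrightarrow> ppow (x::'a::ring) M = 0 \<Longrightarrow> k \<ge> M \<Longrightarrow> ppow x k = 0"
proof (induction k)
  case 0 then show ?case by simp
next
  case (Suc k)
  show ?case
  proof (cases "Suc k = M")
    case True then show ?thesis using Suc.prems by simp
  next
    case False
    then have "ppow x k = 0" "k \<ge> 1" using Suc by auto
    then show ?thesis by (simp add: ppow_Suc)
  qed
qed

lemma center_iff: "z \<in> center \<longleftrightarrow> (\<forall>x. z * x = x * z)"
  by (simp add: center_def)

lemma center_0: "0 \<in> center" by (simp add: center_def)
lemma center_add: "a \<in> center \<Longrightarrow> b \<in> center \<Longrightarrow> a + b \<in> center"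
  by (simp add: center_def algebra_simps)
lemma center_diff: "a \<in> center \<Longrightarrow> b \<in> center \<Longrightarrow> a - b \<in> center"
  by (simp add: center_def algebra_simps)
lemma center_scaleR: "(a::'a::real_algebra) \<in> center \<Longrightarrow> r *\<^sub>R a \<in> center"
  by (simp add: center_def)
lemma center_mult:
  assumes "a \<in> center" "b \<in> center" shows "a * b \<in> center"
  unfolding center_def
proof
  have ax: "a * y = y * a" for y using assms(1) by (simp add: center_def)
  have bx: "b * y = y * b" for y using assms(2) by (simp add: center_def)
  show "\<forall>x. a * b * x = x * (a * b)"
  proof
    fix x
    have "a * b * x = a * (b * x)" by (rule mult.assoc)
    also have "\<dots> = a * (x * b)" by (simp only: bx)
    also have "\<dots> = (a * x) * b" by (rule mult.assoc[symmetric])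
    also have "\<dots> = (x * a) * b" by (simp only: ax)
    also have "\<dots> = x * (a * b)" by (rule mult.assoc)
    finally show "a * b * x = x * (a * b)" .
  qed
qed
lemma center_ppow: "a \<in> center \<Longrightarrow> ppow a m \<in> center"
proof (induction m)
  case 0 then show ?case by simp
next
  case (Suc m) then show ?case by (cases "m = 0") (simp_all add: ppow_Suc center_mult)
qed

definition zsub :: "'a::real_vector set \<Rightarrow> bool" where
  "zsub S \<longleftrightarrow> 0 \<in> S \<and> (\<forall>a\<in>S. \<forall>b\<in>S. a + b \<in> S \<and> a - b \<in> S) \<and> (\<forall>r. \<forall>a\<in>S. r *\<^sub>R a \<in> S)"

lemma zsub_center: "zsub (center :: 'a::real_algebra set)"
  by (simp add: zsub_def center_0 center_add center_diff center_scaleR)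

lemma zsub_zero: "zsub {0::'a::real_vector}"
  by (simp add: zsub_def)

lemma zsub_sum: "zsub S \<Longrightarrow> (\<And>k. k \<in> A \<Longrightarrow> g k \<in> S) \<Longrightarrow> sum g A \<in> S"
  by (induction A rule: infinite_finite_induct) (auto simp: zsub_def)

lemma poly_identity:
  fixes c :: "nat \<Rightarrow> 'a::real_vector"
  shows "(\<Sum>k\<le>n. ((2::real)^(Suc n) / 2^k - 1) *\<^sub>R ((t^k) *\<^sub>R c k))
     = (2::real)^(Suc n) *\<^sub>R (\<Sum>k\<le>Suc n. ((t/2)^k) *\<^sub>R c k) - (\<Sum>k\<le>Suc n. (t^k) *\<^sub>R c k)"
proof -
  have "(2::real)^(Suc n) *\<^sub>R (\<Sum>k\<le>Suc n. ((t/2)^k) *\<^sub>R c k) - (\<Sum>k\<le>Suc n. (t^k) *\<^sub>R c k)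
      = (\<Sum>k\<le>Suc n. ((2::real)^(Suc n) * (t/2)^k) *\<^sub>R c k - (t^k) *\<^sub>R c k)"
    by (simp only: scaleR_sum_right scaleR_scaleR sum_subtractf)
  also have "\<dots> = (\<Sum>k\<le>Suc n. ((2::real)^(Suc n) / 2^k - 1) *\<^sub>R ((t^k) *\<^sub>R c k))"
  proof (rule sum.cong)
    fix k
    have e: "((2::real)^(Suc n) * (t/2)^k) - t^k = ((2::real)^(Suc n) / 2^k - 1) * t^k"
      by (simp add: power_divide algebra_simps)
    show "((2::real)^(Suc n) * (t/2)^k) *\<^sub>R c k - (t^k) *\<^sub>R c k =
         ((2::real)^(Suc n) / 2^k - 1) *\<^sub>R ((t^k) *\<^sub>R c k)"
      by (metis scaleR_diff_left scaleR_scaleR e)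
  qed simp
  also have "\<dots> = (\<Sum>k\<le>n. ((2::real)^(Suc n) / 2^k - 1) *\<^sub>R ((t^k) *\<^sub>R c k))"
    by (simp only: sum.atMost_Suc) simp
  finally show ?thesis by (rule sym)
qed

lemma poly_coeffs:
  fixes c :: "nat \<Rightarrow> 'a::real_vector"
  assumes S: "zsub S" and d: "d > 0"
    and h: "\<And>t. 0 < t \<Longrightarrow> t < d \<Longrightarrow> (\<Sum>k\<le>n. (t^k) *\<^sub>R c k) \<in> S"
  shows "\<forall>k\<le>n. c k \<in> S"
  using h
proof (induction n arbitrary: c)
  case 0
  have "0 < d/2" "d/2 < d" using d by auto
  from "0.prems"[OF this] have "(\<Sum>k\<le>0. ((d/2)^k) *\<^sub>R c k) \<in> S" .
  then show ?case by simp
next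
  case (Suc n)
  define c' where "c' k = ((2::real)^(Suc n) / 2^k - 1) *\<^sub>R c k" for k
  have "\<forall>k\<le>n. c' k \<in> S"
  proof (rule Suc.IH)
    fix t :: real assume t: "0 < t" "t < d"
    have "(\<Sum>k\<le>n. (t^k) *\<^sub>R c' k) = (\<Sum>k\<le>n. ((2::real)^(Suc n) / 2^k - 1) *\<^sub>R ((t^k) *\<^sub>R c k))"
      by (intro sum.cong refl) (simp only: c'_def scaleR_left_commute)
    also have "\<dots> = (2::real)^(Suc n) *\<^sub>R (\<Sum>k\<le>Suc n. ((t/2)^k) *\<^sub>R c k) - (\<Sum>k\<le>Suc n. (t^k) *\<^sub>R c k)"
      by (rule poly_identity)
    also have "\<dots> \<in> S"
    proof -
      have P1: "(\<Sum>k\<le>Suc n. ((t/2)^k) *\<^sub>R c k) \<in> S" using t by (intro Suc.prems) auto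
      have P2: "(\<Sum>k\<le>Suc n. (t^k) *\<^sub>R c k) \<in> S" using t by (intro Suc.prems) auto
      show ?thesis using P1 P2 S unfolding zsub_def by blast
    qed
    finally show "(\<Sum>k\<le>n. (t^k) *\<^sub>R c' k) \<in> S" .
  qed
  then have low: "\<forall>k\<le>n. c k \<in> S"
  proof (intro allI impI)
    fix k assume "k \<le> n" and "\<forall>k\<le>n. c' k \<in> S"
    then have "c' k \<in> S" by auto
    have "(2::real)^k < 2^(Suc n)" using \<open>k \<le> n\<close> by (intro power_strict_increasing) auto
    then have ne: "(2::real)^(Suc n) / 2^k - 1 \<noteq> 0" by (simp add: field_simps)
    have eq: "inverse ((2::real)^(Suc n) / 2^k - 1) *\<^sub>R c' k = c k"
      using ne by (simp add: c'_def)
    have "inverse ((2::real)^(Suc n) / 2^k - 1) *\<^sub>R c' k \<in> S"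
      using \<open>c' k \<in> S\<close> S unfolding zsub_def by blast
    then show "c k \<in> S" by (simp only: eq)
  qed
  define t where "t = d/2"
  have t: "0 < t" "t < d" using d by (auto simp: t_def)
  have "(t^(Suc n)) *\<^sub>R c (Suc n) = (\<Sum>k\<le>Suc n. (t^k) *\<^sub>R c k) - (\<Sum>k\<le>n. (t^k) *\<^sub>R c k)"
    by simp
  also have "\<dots> \<in> S"
  proof -
    have A: "(\<Sum>k\<le>Suc n. (t^k) *\<^sub>R c k) \<in> S" using Suc.prems[OF t] .
    have B: "(\<Sum>k\<le>n. (t^k) *\<^sub>R c k) \<in> S"
    proof (rule zsub_sum[OF S])
      fix k assume "k \<in> {..n}"
      then have "c k \<in> S" using low by auto
      then show "(t^k) *\<^sub>R c k \<in> S" using S unfolding zsub_def by blast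
    qed
    show ?thesis using A B S unfolding zsub_def by blast
  qed
  finally have "inverse (t^(Suc n)) *\<^sub>R ((t^(Suc n)) *\<^sub>R c (Suc n)) \<in> S"
    using S unfolding zsub_def by blast
  moreover have "inverse (t^(Suc n)) *\<^sub>R ((t^(Suc n)) *\<^sub>R c (Suc n)) = c (Suc n)"
    using t by (simp only: scaleR_scaleR) (simp del: power_Suc)
  ultimately have "c (Suc n) \<in> S" by simp
  show ?case
  proof (intro allI impI)
    fix k assume "k \<le> Suc n"
    then show "c k \<in> S" using low \<open>c (Suc n) \<in> S\<close> by (cases "k = Suc n") auto
  qed
qed


fun lin :: "'a::ring \<Rightarrow> 'a \<Rightarrow> nat \<Rightarrow> 'a" where
  "lin a b 0 = b"
| "lin a b (Suc 0) = b"
| "lin a b (Suc (Suc m)) = lin a b (Suc m) * a + ppow a (Suc m) * b"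

lemma expand:
  fixes a b :: "'a::real_algebra"
  assumes "m \<ge> 1"
  shows "\<exists>c. (\<forall>t. ppow (a + t *\<^sub>R b) m = (\<Sum>k\<le>m. (t^k) *\<^sub>R c k))
           \<and> c m = ppow b m \<and> c 1 = lin a b m \<and> c 0 = ppow a m"
  using assms
proof (induction m)
  case 0 then show ?case by simp
next
  case (Suc m)
  show ?case
  proof (cases "m = 0")
    case True
    define c where "c k = (if k = 0 then a else b)" for k :: nat
    show ?thesis
      by (rule exI[of _ c]) (simp add: c_def True)
  next
    case False
    then have m1: "m \<ge> 1" by simp
    from Suc.IH[OF m1] obtain c where
      c: "\<And>t. ppow (a + t *\<^sub>R b) m = (\<Sum>k\<le>m. (t^k) *\<^sub>R c k)"
         "c m = ppow b m" "c 1 = lin a b m" "c 0 = ppow a m" by blast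
    define c' where "c' k = (if k \<le> m then c k * a else 0) + (if k = 0 then 0 else c (k - 1) * b)" for k
    have "ppow (a + t *\<^sub>R b) (Suc m) = (\<Sum>k\<le>Suc m. (t^k) *\<^sub>R c' k)" for t
    proof -
      have "ppow (a + t *\<^sub>R b) (Suc m) = (\<Sum>k\<le>m. (t^k) *\<^sub>R c k) * a + (\<Sum>k\<le>m. (t^k) *\<^sub>R c k) * (t *\<^sub>R b)"
        using m1 c(1) by (simp add: ppow_Suc distrib_left)
      also have "\<dots> = (\<Sum>k\<le>m. (t^k) *\<^sub>R (c k * a)) + (\<Sum>k\<le>m. (t^(Suc k)) *\<^sub>R (c k * b))"
      proof -
        have "(\<Sum>k\<le>m. (t^k) *\<^sub>R c k) * a = (\<Sum>k\<le>m. (t^k) *\<^sub>R (c k * a))"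
          by (simp add: sum_distrib_right)
        moreover have "(\<Sum>k\<le>m. (t^k) *\<^sub>R c k) * (t *\<^sub>R b) = (\<Sum>k\<le>m. (t^(Suc k)) *\<^sub>R (c k * b))"
          unfolding sum_distrib_right by (intro sum.cong refl) (simp add: mult.commute)
        ultimately show ?thesis by simp
      qed
      also have "(\<Sum>k\<le>m. (t^k) *\<^sub>R (c k * a)) = (\<Sum>k\<le>Suc m. (t^k) *\<^sub>R (if k \<le> m then c k * a else 0))"
        by simp
      also have "(\<Sum>k\<le>m. (t^(Suc k)) *\<^sub>R (c k * b)) = (\<Sum>k\<le>Suc m. (t^k) *\<^sub>R (if k = 0 then 0 else c (k - 1) * b))"
        by (simp only: sum.atMost_Suc_shift) simp
      also have "(\<Sum>k\<le>Suc m. (t^k) *\<^sub>R (if k \<le> m then c k * a else 0)) + (\<Sum>k\<le>Suc m. (t^k) *\<^sub>R (if k = 0 then 0 else c (k - 1) * b))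
          = (\<Sum>k\<le>Suc m. (t^k) *\<^sub>R c' k)"
        unfolding sum.distrib[symmetric] by (intro sum.cong refl) (simp add: c'_def scaleR_add_right)
      finally show ?thesis .
    qed
    moreover have "c' (Suc m) = ppow b (Suc m)" using c(2) m1 by (simp add: c'_def ppow_Suc)
    moreover have "c' 1 = lin a b (Suc m)"
    proof -
      obtain m' where m': "m = Suc m'" using m1 by (cases m) auto
      show ?thesis using c(3,4) m1 by (simp add: c'_def m')
    qed
    moreover have "c' 0 = ppow a (Suc m)" using c(4) m1 by (simp add: c'_def ppow_Suc)
    ultimately show ?thesis by blast
  qed
qed

lemma additive_cont_linear:
  fixes f :: "'a::real_normed_vector \<Rightarrow> 'b::real_normed_vector"
  assumes add: "\<And>x y. f (x + y) = f x + f y" and cont: "continuous_on UNIV f"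
  shows "linear f"
proof (rule linearI)
  show "f (x + y) = f x + f y" for x y by (rule add)
  have f0: "f 0 = 0" using add[of 0 0] by simp
  have fneg: "f (- x) = - f x" for x using add[of x "-x"] f0 by (metis neg_eq_iff_add_eq_0 add.right_inverse)
  have fnat: "f (of_nat n *\<^sub>R x) = of_nat n *\<^sub>R f x" for n x
    by (induction n) (simp_all add: f0 add scaleR_add_left)
  have fint: "f (of_int i *\<^sub>R x) = of_int i *\<^sub>R f x" for i x
  proof (cases "i \<ge> 0")
    case True
    then have "i = int (nat i)" by simp
    then show ?thesis using fnat[of "nat i" x] by (metis of_int_of_nat_eq)
  next
    case False
    then have i: "i = - int (nat (- i))" by simp
    have "f (of_int i *\<^sub>R x) = f (- (of_nat (nat (- i)) *\<^sub>R x))"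
      by (subst i) (simp add: scaleR_left.minus)
    also have "\<dots> = - (of_nat (nat (- i)) *\<^sub>R f x)" by (simp only: fneg fnat)
    also have "\<dots> = of_int i *\<^sub>R f x" by (subst (2) i) (simp add: scaleR_left.minus)
    finally show ?thesis .
  qed
  have frat: "f (r *\<^sub>R x) = r *\<^sub>R f x" if "r \<in> \<rat>" for r x
  proof -
    obtain a b where ab: "b > 0" "r = of_int a / of_int b" using \<open>r \<in> \<rat>\<close> by (rule Rats_cases')
    have "of_int b *\<^sub>R f (r *\<^sub>R x) = f (of_int b *\<^sub>R (r *\<^sub>R x))" by (rule fint[symmetric])
    also have "of_int b *\<^sub>R (r *\<^sub>R x) = of_int a *\<^sub>R x" using ab by simp
    also have "f (of_int a *\<^sub>R x) = of_int a *\<^sub>R f x" by (rule fint)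
    finally have "of_int b *\<^sub>R f (r *\<^sub>R x) = of_int a *\<^sub>R f x" .
    then have "inverse (of_int b) *\<^sub>R (of_int b *\<^sub>R f (r *\<^sub>R x)) = inverse (of_int b) *\<^sub>R (of_int a *\<^sub>R f x)"
      by simp
    moreover have "inverse (of_int b) *\<^sub>R (of_int b *\<^sub>R f (r *\<^sub>R x)) = f (r *\<^sub>R x)"
      using ab by simp
    moreover have "inverse (of_int b) *\<^sub>R (of_int a *\<^sub>R f x) = r *\<^sub>R f x"
      using ab by (simp add: divide_inverse mult.commute)
    ultimately show ?thesis by simp
  qed
  fix r :: real and x :: 'a
  have cl: "closed {r::real. f (r *\<^sub>R x) = r *\<^sub>R f x}"
  proof (rule closed_Collect_eq)
    show "continuous_on UNIV (\<lambda>r::real. f (r *\<^sub>R x))"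
      by (rule continuous_on_compose2[OF cont]) (auto intro: continuous_intros)
    show "continuous_on UNIV (\<lambda>r::real. r *\<^sub>R f x)" by (intro continuous_intros)
  qed
  have "\<rat> \<subseteq> {r::real. f (r *\<^sub>R x) = r *\<^sub>R f x}" using frat by auto
  then have "closure \<rat> \<subseteq> {r::real. f (r *\<^sub>R x) = r *\<^sub>R f x}" using cl by (rule closure_minimal)
  then show "f (r *\<^sub>R x) = r *\<^sub>R f x" using Rats_closure_real by auto
qed

lemma prime_centralD:
  fixes z :: "'a::ring"
  assumes pr: "prime_ring TYPE('a)" and z: "z \<in> center" "z * w = 0"
  shows "z = 0 \<or> w = 0"
proof -
  have "\<forall>b. z * b * w = 0"
  proof
    fix b have "z * b * w = b * (z * w)" using z(1) by (simp add: center_def mult.assoc)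
    then show "z * b * w = 0" using z(2) by simp
  qed
  then show ?thesis using pr unfolding prime_ring_def by blast
qed

lemma central_ppow_nonzero:
  fixes z :: "'a::ring"
  assumes pr: "prime_ring TYPE('a)" and z: "z \<in> center" "z \<noteq> 0"
  shows "ppow z k \<noteq> 0"
proof (induction k)
  case 0 then show ?case using z by simp
next
  case (Suc k)
  show ?case
  proof (cases "k = 0")
    case True then show ?thesis using z by simp
  next
    case False
    then have "ppow z (Suc k) = ppow z k * z" by (simp add: ppow_Suc)
    moreover have "ppow z k * z \<noteq> 0"
      using prime_centralD[OF pr center_ppow[OF z(1), of k], of z] Suc z by auto
    ultimately show ?thesis by simp
  qed
qed

lemma lin_central:
  fixes z x :: "'a::real_algebra"
  assumes z: "z \<in> center" and m: "m \<ge> 2"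
  shows "lin z x m = of_nat m *\<^sub>R (ppow z (m - 1) * x)"
  using m
proof (induction m)
  case 0 then show ?case by simp
next
  case (Suc m)
  show ?case
  proof (cases "m = 1")
    case True
    have "x * z = z * x" using z by (simp add: center_def)
    then show ?thesis using True by (simp add: scaleR_2)
  next
    case False
    then have m2: "m \<ge> 2" using Suc.prems by simp
    obtain m' where m': "m = Suc m'" using m2 by (cases m) auto
    have IH: "lin z x m = of_nat m *\<^sub>R (ppow z (m - 1) * x)" using Suc.IH m2 by simp
    have "lin z x (Suc m) = lin z x m * z + ppow z m * x" by (simp add: m')
    also have "lin z x m * z = of_nat m *\<^sub>R (ppow z (m - 1) * x * z)" by (simp add: IH)
    also have "ppow z (m - 1) * x * z = ppow z m * x"
    proof -
      have "x * z = z * x" using z by (simp add: center_def)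
      then have "ppow z (m - 1) * x * z = ppow z (m - 1) * z * x" by (simp add: mult.assoc)
      also have "ppow z (m - 1) * z = ppow z m" using m2 m' by (simp add: ppow_Suc)
      finally show ?thesis .
    qed
    finally show ?thesis by (simp add: scaleR_add_left)
  qed
qed

lemma nil_lin:
  fixes a b :: "'a::ring"
  assumes nil: "\<And>k. k \<ge> M \<Longrightarrow> ppow a k = 0" and M: "M \<ge> 2" and m: "m \<ge> 2"
  shows "ppow a (M - 1) * lin a b m = ppow a (M - 1) * b * ppow a (m - 1)"
  using m
proof (induction m)
  case 0 then show ?case by simp
next
  case (Suc m)
  have Pa: "ppow a (M - 1) * a = 0"
    using nil[of M] M ppow_Suc[of "M - 1" a] by simp
  show ?case
  proof (cases "m = 1")
    case True
    have "ppow a (M - 1) * (a * b) = 0" using Pa by (simp add: mult.assoc[symmetric])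
    then show ?thesis using True by (simp add: distrib_left mult.assoc)
  next
    case False
    then have m2: "m \<ge> 2" using Suc.prems by simp
    obtain m' where m': "m = Suc m'" using m2 by (cases m) auto
    have IH: "ppow a (M - 1) * lin a b m = ppow a (M - 1) * b * ppow a (m - 1)" using Suc.IH m2 by simp
    have P0: "ppow a (M - 1) * ppow a m = 0"
      using ppow_add[of "M - 1" m a] nil[of "M - 1 + m"] M m2 by simp
    have "ppow a (M - 1) * lin a b (Suc m) = ppow a (M - 1) * lin a b m * a + ppow a (M - 1) * ppow a m * b"
      by (simp add: m' distrib_left mult.assoc)
    also have "\<dots> = ppow a (M - 1) * b * (ppow a (m - 1) * a)" using IH P0 by (simp add: mult.assoc)
    also have "ppow a (m - 1) * a = ppow a m" using m2 m' by (simp add: ppow_Suc)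
    finally show ?thesis by simp
  qed
qed


lemma final_alg:
  fixes n :: nat
  assumes pr: "prime_ring TYPE('a::real_algebra)" and n: "n \<ge> 2"
    and pw: "\<And>x::'a. ppow x n \<in> center"
  shows "(x::'a) * y = y * x"
proof (cases "\<exists>w::'a. ppow w n \<noteq> 0")
  case True
  then obtain w :: 'a where w: "ppow w n \<noteq> 0" by blast
  define z where "z = ppow w n"
  have zc: "z \<in> center" and z0: "z \<noteq> 0" using pw w by (auto simp: z_def)
  have cx: "ppow z (n - 1) * v \<in> center" for v
  proof -
    obtain c where c: "\<And>t. ppow (z + t *\<^sub>R v) n = (\<Sum>k\<le>n. (t^k) *\<^sub>R c k)"
        "c 1 = lin z v n"
      using expand[of n z v] n by auto
    have "\<forall>k\<le>n. c k \<in> center"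
    proof (rule poly_coeffs[OF zsub_center, of 1])
      fix t :: real
      show "(\<Sum>k\<le>n. (t^k) *\<^sub>R c k) \<in> center" using pw[of "z + t *\<^sub>R v"] c(1)[of t] by simp
    qed simp
    then have "c 1 \<in> center" using n by simp
    then have "of_nat n *\<^sub>R (ppow z (n - 1) * v) \<in> center"
      using c(2) lin_central[OF zc n] by simp
    then have "inverse (of_nat n) *\<^sub>R (of_nat n *\<^sub>R (ppow z (n - 1) * v)) \<in> center"
      by (rule center_scaleR)
    then show ?thesis using n by simp
  qed
  define W where "W = ppow z (n - 1)"
  have Wc: "W \<in> center" using center_ppow[OF zc] by (simp add: W_def)
  have W0: "W \<noteq> 0" using central_ppow_nonzero[OF pr zc z0] by (simp add: W_def)
  have "W * (x * y) = (W * x) * y" by (simp add: mult.assoc)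
  also have "\<dots> = y * (W * x)" using cx[of x] by (simp add: W_def center_def)
  also have "\<dots> = (y * W) * x" by (simp add: mult.assoc)
  also have "y * W = W * y" using Wc by (simp add: center_def)
  also have "(W * y) * x = W * (y * x)" by (simp add: mult.assoc)
  finally have "W * (x * y - y * x) = 0" by (simp add: right_diff_distrib)
  then have "x * y - y * x = 0" using prime_centralD[OF pr Wc] W0 by blast
  then show ?thesis by simp
next
  case False
  then have nil: "\<And>w::'a. ppow w n = 0" by blast
  define M where "M = (LEAST M. M \<ge> 1 \<and> (\<forall>x::'a. ppow x M = 0))"
  have ex: "n \<ge> 1 \<and> (\<forall>x::'a. ppow x n = 0)" using n nil by auto
  have M: "M \<ge> 1 \<and> (\<forall>x::'a. ppow x M = 0)"
    unfolding M_def by (rule LeastI[of _ n]) (rule ex)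
  show ?thesis
  proof (cases "M = 1")
    case True
    then have "\<forall>x::'a. x = 0" using M by auto
    then show ?thesis by (metis mult_zero_left)
  next
    case False
    then have M2: "M \<ge> 2" using M by auto
    have "\<not> (M - 1 \<ge> 1 \<and> (\<forall>x::'a. ppow x (M - 1) = 0))"
    proof
      assume "M - 1 \<ge> 1 \<and> (\<forall>x::'a. ppow x (M - 1) = 0)"
      then have "M \<le> M - 1" unfolding M_def by (rule Least_le)
      then show False using M2 by simp
    qed
    then obtain a :: 'a where a: "ppow a (M - 1) \<noteq> 0" using M2 by auto
    have nila: "\<And>k. k \<ge> M \<Longrightarrow> ppow a k = 0"
      using ppow_zero_ge[of M a] M by auto
    have "ppow a (M - 1) * b * ppow a (M - 1) = 0" for b
    proof -
      obtain c where c: "\<And>t. ppow (a + t *\<^sub>R b) M = (\<Sum>k\<le>M. (t^k) *\<^sub>R c k)"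
          "c 1 = lin a b M"
        using expand[of M a b] M by auto
      have "\<forall>k\<le>M. c k \<in> {0}"
      proof (rule poly_coeffs[OF zsub_zero, of 1])
        fix t :: real
        show "(\<Sum>k\<le>M. (t^k) *\<^sub>R c k) \<in> {0}" using M c(1)[of t] by simp
      qed simp
      then have "lin a b M = 0" using c(2) M by auto
      then show ?thesis using nil_lin[OF nila M2 M2, of b] by simp
    qed
    then have "ppow a (M - 1) = 0" using pr unfolding prime_ring_def by blast
    with a show ?thesis by simp
  qed
qed

lemma continuous_on_ppow: "continuous_on UNIV (\<lambda>x::'a::real_normed_algebra. ppow x n)"
proof (induction n)
  case 0 then show ?case by (simp add: continuous_on_id)
next
  case (Suc n)
  show ?case
  proof (cases "n = 0")
    case True then show ?thesis by (simp add: continuous_on_id)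
  next
    case False
    then have eq: "(\<lambda>x::'a. ppow x (Suc n)) = (\<lambda>x. ppow x n * x)" by (simp add: ppow_Suc)
    show ?thesis unfolding eq by (rule continuous_on_mult[OF Suc.IH continuous_on_id])
  qed
qed

lemma closed_center: "closed (center :: 'a::real_normed_algebra set)"
proof -
  have eq: "center = (\<Inter>x. {z::'a. z * x = x * z})" by (auto simp: center_def)
  have cl: "closed {z::'a. z * x = x * z}" for x
    by (rule closed_Collect_eq) (intro continuous_on_mult continuous_on_id continuous_on_const)+
  have "closed (\<Inter>x. {z::'a. z * x = x * z})" by (rule closed_INT) (simp add: cl)
  then show ?thesis by (simp only: eq)
qed

lemma extend:
  fixes L :: "'a::real_normed_algebra \<Rightarrow> 'a"
  assumes L: "linear L" and A: "open A" "a \<in> A" and m: "m \<ge> 1"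
    and h: "\<And>x. x \<in> A \<Longrightarrow> L (ppow x m) \<in> center"
  shows "L (ppow x m) \<in> center"
proof -
  obtain e where e: "e > 0" "ball a e \<subseteq> A" using A open_contains_ball by blast
  define d where "d = e / (norm x + 1)"
  have d: "d > 0" unfolding d_def using e by (intro divide_pos_pos) (auto intro: add_nonneg_pos)
  obtain c where c: "\<And>t. ppow (a + t *\<^sub>R x) m = (\<Sum>k\<le>m. (t^k) *\<^sub>R c k)" "c m = ppow x m"
    using expand[OF m, of a x] by auto
  have "\<forall>k\<le>m. L (c k) \<in> center"
  proof (rule poly_coeffs[OF zsub_center d])
    fix t :: real assume t: "0 < t" "t < d"
    have "norm (t *\<^sub>R x) = t * norm x" using t by simp
    also have "\<dots> \<le> d * norm x" using t by (simp add: mult_right_mono)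
    also have "\<dots> < e"
    proof -
      have "d * norm x = e * (norm x / (norm x + 1))" by (simp add: d_def)
      also have "\<dots> < e * 1"
      proof (rule mult_strict_left_mono[OF _ e(1)])
        have pos: "0 < norm x + 1" by (metis norm_ge_zero add_nonneg_pos zero_less_one)
        have "norm x < norm x + 1" by simp
        then show "norm x / (norm x + 1) < 1" using pos by (subst divide_less_eq) auto
      qed
      finally show ?thesis by simp
    qed
    finally have "a + t *\<^sub>R x \<in> ball a e" by (simp add: dist_norm)
    then have "L (ppow (a + t *\<^sub>R x) m) \<in> center" using e h by auto
    also have "L (ppow (a + t *\<^sub>R x) m) = (\<Sum>k\<le>m. (t^k) *\<^sub>R L (c k))"
      using c(1) by (simp add: linear_sum[OF L] linear_scale[OF L])
    finally show "(\<Sum>k\<le>m. (t^k) *\<^sub>R L (c k)) \<in> center" .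
  qed
  then show ?thesis using c(2) by auto
qed

lemma hom_ppow: "(\<And>x y. f (x * y) = f x * f y) \<Longrightarrow> f (ppow x n) = ppow (f x) n"
  by (induction x n rule: ppow.induct) auto


theorem theorem2p4:
  fixes f :: "'a::{real_normed_algebra, banach} \<Rightarrow> 'a"
    and H1 H2 :: "'a set"
  assumes "prime_ring TYPE('a)"
    and "open H1" and "H1 \<noteq> {}"
    and "open H2" and "H2 \<noteq> {}"
    and "ring_automorphism f"
    and "continuous_on UNIV f"
    and "\<forall>x\<in>H1. \<forall>y\<in>H2. \<exists>p q::nat. p > 0 \<and> q > 0 \<and>
           f (jordan_prod (ppow x p) (ppow y q)) - commutator (ppow x p) (ppow y q) \<in> center"
  shows "\<forall>x y::'a. x * y = y * x"
proof -
  note pr = assms(1)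
  have bijf: "bij f" and fadd: "\<And>x y. f (x + y) = f x + f y" and fmul: "\<And>x y. f (x * y) = f x * f y"
    using assms(6) unfolding ring_automorphism_def by auto
  have linf: "linear f" by (rule additive_cont_linear[OF fadd assms(7)])
  define g where "g p q z = f (jordan_prod (ppow (fst z) p) (ppow (snd z) q)) - commutator (ppow (fst z) p) (ppow (snd z) q)"
    for p q :: nat and z :: "'a \<times> 'a"
  have contg: "continuous_on UNIV (g p q)" for p q
  proof -
    have c1: "continuous_on UNIV (\<lambda>z::'a\<times>'a. ppow (fst z) p)"
      by (rule continuous_on_compose2[OF continuous_on_ppow continuous_on_fst[OF continuous_on_id]]) auto
    have c2: "continuous_on UNIV (\<lambda>z::'a\<times>'a. ppow (snd z) q)"
      by (rule continuous_on_compose2[OF continuous_on_ppow continuous_on_snd[OF continuous_on_id]]) auto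
    have c3: "continuous_on UNIV (\<lambda>z::'a\<times>'a. ppow (fst z) p * ppow (snd z) q + ppow (snd z) q * ppow (fst z) p)"
      by (intro continuous_on_add continuous_on_mult c1 c2)
    have c4: "continuous_on UNIV (\<lambda>z::'a\<times>'a. f (ppow (fst z) p * ppow (snd z) q + ppow (snd z) q * ppow (fst z) p))"
      by (rule continuous_on_compose2[OF assms(7) c3]) auto
    have c5: "continuous_on UNIV (\<lambda>z::'a\<times>'a. ppow (fst z) p * ppow (snd z) q - ppow (snd z) q * ppow (fst z) p)"
      by (intro continuous_on_diff continuous_on_mult c1 c2)
    have eq: "g p q = (\<lambda>z. f (ppow (fst z) p * ppow (snd z) q + ppow (snd z) q * ppow (fst z) p)
               - (ppow (fst z) p * ppow (snd z) q - ppow (snd z) q * ppow (fst z) p))"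
      by (simp add: g_def jordan_prod_def commutator_def fun_eq_iff)
    show ?thesis unfolding eq by (rule continuous_on_diff[OF c4 c5])
  qed
  define W where "W = H1 \<times> H2"
  have openW: "open W" unfolding W_def using assms(2,4) by (rule open_Times)
  have W0: "W \<noteq> {}" using assms(3,5) by (simp add: W_def)
  define X where "X = top_of_set W"
  define G where "G = (\<lambda>(p,q). {z \<in> W. g p q z \<in> center}) ` {(p,q). p > (0::nat) \<and> q > (0::nat)}"
  have cntG: "countable G" unfolding G_def
    by (rule countable_image) (rule countable_subset[of _ UNIV]; simp)
  have cmX: "completely_metrizable_space X" unfolding X_def
    by (rule completely_metrizable_space_openin[OF completely_metrizable_space_euclidean])
       (simp add: openW flip: open_openin)
  have UG: "\<Union>G = W"
  proof
    show "\<Union>G \<subseteq> W" by (auto simp: G_def)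
    show "W \<subseteq> \<Union>G"
    proof
      fix z assume z: "z \<in> W"
      obtain x y where xy: "z = (x, y)" by (cases z)
      then have "x \<in> H1" "y \<in> H2" using z by (auto simp: W_def)
      then obtain p q where "p > 0" "q > 0"
          "f (jordan_prod (ppow x p) (ppow y q)) - commutator (ppow x p) (ppow y q) \<in> center"
        using assms(8) by blast
      then have "p > 0" "q > 0" "g p q z \<in> center" by (auto simp: g_def xy)
      then show "z \<in> \<Union>G" using z unfolding G_def by blast
    qed
  qed
  have topX: "topspace X = W" by (simp add: X_def)
  have "X interior_of \<Union>G = W" unfolding UG by (metis interior_of_topspace topX)
  then have "X interior_of \<Union>G \<noteq> {}" using W0 by simp
  then obtain T where TG: "T \<in> G" and Tn: "\<not> (closedin X T \<and> X interior_of T = {})"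
    using Baire_category_alt[OF disjI1[OF cmX] cntG] by blast
  from TG obtain p q where pq: "p > 0" "q > 0" and Teq: "T = {z \<in> W. g p q z \<in> center}"
    unfolding G_def by blast
  have "closed (g p q -` center)"
  proof (rule continuous_closed_vimage[OF closed_center])
    fix z show "continuous (at z) (g p q)"
      using contg[of p q] continuous_on_eq_continuous_at[OF open_UNIV] by blast
  qed
  then have "closedin X (W \<inter> g p q -` center)" unfolding X_def by (rule closedin_closed_Int)
  moreover have "W \<inter> g p q -` center = T" by (auto simp: Teq)
  ultimately have "closedin X T" by simp
  with Tn have "X interior_of T \<noteq> {}" by blast
  then obtain z0 U where U: "openin X U" "z0 \<in> U" "U \<subseteq> T" unfolding interior_of_def by blast
  have "open U" using U(1) openW unfolding X_def by (rule openin_open_trans)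
  then obtain A B where AB: "open A" "open B" "z0 \<in> A \<times> B" "A \<times> B \<subseteq> U"
    using U(2) by (rule open_prod_elim)
  have ABc: "g p q (x, y) \<in> center" if "x \<in> A" "y \<in> B" for x y
    using that AB(4) U(3) Teq by auto
  define n where "n = p + q"
  have n2: "n \<ge> 2" and n1: "n \<ge> 1" using pq by (auto simp: n_def)
  have fB: "f (ppow y n) \<in> center" if y: "y \<in> B" for y
  proof -
    define w where "w = ppow y q"
    define L where "L u = f (u * w + w * u) - (u * w - w * u)" for u
    have linL: "linear L"
    proof (rule linearI)
      fix u v
      show "L (u + v) = L u + L v"
        by (simp add: L_def distrib_left distrib_right add_ac fadd algebra_simps)
    next
      fix r :: real and u
      have "L (r *\<^sub>R u) = f (r *\<^sub>R (u * w + w * u)) - r *\<^sub>R (u * w - w * u)"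
        by (simp add: L_def scaleR_add_right scaleR_diff_right)
      also have "\<dots> = r *\<^sub>R L u" by (simp add: L_def linear_scale[OF linf] scaleR_diff_right)
      finally show "L (r *\<^sub>R u) = r *\<^sub>R L u" .
    qed
    have "L (ppow x p) \<in> center" for x
    proof (rule extend[OF linL AB(1)])
      show "fst z0 \<in> A" using AB(3) by auto
      show "p \<ge> 1" using pq by simp
      fix x assume "x \<in> A"
      then have "g p q (x, y) \<in> center" using y by (rule ABc)
      then show "L (ppow x p) \<in> center" by (simp add: g_def L_def w_def jordan_prod_def commutator_def)
    qed
    then have Ly: "L (ppow y p) \<in> center" .
    have e1: "ppow y p * w = ppow y n" unfolding w_def n_def using pq by (simp add: ppow_add)
    have e2: "w * ppow y p = ppow y n" unfolding w_def n_def using pq ppow_add[of q p y] by (simp add: add.commute)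
    have "L (ppow y p) = 2 *\<^sub>R f (ppow y n)" by (simp add: L_def e1 e2 fadd scaleR_2)
    with Ly have "2 *\<^sub>R f (ppow y n) \<in> center" by simp
    then have "(1/2) *\<^sub>R (2 *\<^sub>R f (ppow y n)) \<in> center" by (rule center_scaleR)
    then show ?thesis by simp
  qed
  have fall: "f (ppow y n) \<in> center" for y
  proof (rule extend[OF linf AB(2)])
    show "snd z0 \<in> B" using AB(3) by auto
    show "n \<ge> 1" by (rule n1)
    fix y assume "y \<in> B" then show "f (ppow y n) \<in> center" by (rule fB)
  qed
  have pw: "ppow v n \<in> center" for v :: 'a
  proof -
    obtain y where "v = f y" using bijf by (metis bij_pointE)
    then have "ppow v n = f (ppow y n)" using hom_ppow[of f y n] fmul by simp
    then show ?thesis using fall by simp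
  qed
  show ?thesis using final_alg[OF pr n2 pw] by blast
qed

end
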